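(* Let $F(z)=\sum_{k=0}^\infty b_k z^k\in\mathcal{B}$ with $b_1=a\in(0,1)$, and let $0<r\le 1/\sqrt3$. Then \[ \sum_{k=2}^\infty k|b_k|^2r^{2k}\le \frac{3(9-4a^2)^2}{64a^4}\left(-\log\Big(1-\frac{4a^2r^2}{3}\Big)-\frac{4a^2r^2}{3}\right). \]
   Context: $\mathbb{D}$ denotes the open unit disc. $\mathcal{B}$ is the class of functions $F$ analytic in $\mathbb{D}$ satisfying $|F'(z)|\le \frac{1}{1-|z|^2}$ for all $z\in\mathbb{D}$. For $F\in\mathcal{B}$ we write its Taylor expansion as $F(z)=\sum_{k=0}^\infty b_k z^k$. *)

theory Defs
  imports "HOL-Complex_Analysis.Complex_Analysis"
begin

definition bloch_class :: "(complex \<Rightarrow> complex) set" where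
  "bloch_class = {F. F holomorphic_on ball 0 1 \<and>
      (\<forall>z \<in> ball 0 1. norm (deriv F z) \<le> 1 / (1 - (norm z)^2))}"

definition taylor_coeff :: "(complex \<Rightarrow> complex) \<Rightarrow> nat \<Rightarrow> complex" where
  "taylor_coeff F k = (deriv ^^ k) F 0 / of_nat (fact k)"

end

theory Submission
  imports Defs
begin

lemma fourier_coeff:
  fixes f :: "complex \<Rightarrow> complex"
  assumes hol: "f holomorphic_on ball 0 \<rho>" and s: "0 < s" "s < \<rho>"
  shows "((\<lambda>t. f (circlepath 0 s t) * cnj (circlepath 0 s t) ^ n) has_integral
            ((deriv ^^ n) f 0 / fact n * s^(2*n))) {0..1}"
proof -
  have cont: "continuous_on (cball 0 s) f"
  proof -
    have "cball 0 s \<subseteq> ball (0::complex) \<rho>" using s by (auto simp: subset_eq)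
    then show ?thesis using holomorphic_on_imp_continuous_on[OF hol] continuous_on_subset by blast
  qed
  have holb: "f holomorphic_on ball 0 s"
    using hol s by (meson holomorphic_on_subset less_eq_real_def subset_ball)
  have "((\<lambda>u. f u / (u-0) ^ (Suc n)) has_contour_integral ((2 * pi * \<i>) / (fact n) * (deriv ^^ n) f 0)) (circlepath 0 s)"
    by (rule Cauchy_has_contour_integral_higher_derivative_circlepath[OF cont holb]) (use s in auto)
  then have I: "((\<lambda>t. f (circlepath 0 s t) / (circlepath 0 s t) ^ Suc n * (2 * pi * \<i> * s * exp(2 * of_real pi * \<i> * t)))
      has_integral ((2 * pi * \<i>) / (fact n) * (deriv ^^ n) f 0)) {0..1}"
    unfolding has_contour_integral_def
    by (rule has_integral_eq[rotated]) (simp add: vector_derivative_circlepath01)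
  have I2: "((\<lambda>t. (s^(2*n) / (2 * pi * \<i>)) * (f (circlepath 0 s t) / (circlepath 0 s t) ^ Suc n * (2 * pi * \<i> * s * exp(2 * of_real pi * \<i> * t))))
      has_integral ((s^(2*n) / (2 * pi * \<i>)) * ((2 * pi * \<i>) / (fact n) * (deriv ^^ n) f 0))) {0..1}"
    by (rule has_integral_mult_right[OF I])
  show ?thesis
  proof (rule has_integral_eq_rhs[OF has_integral_eq[OF _ I2]])
    fix t :: real
    define e where "e = exp(2 * of_real pi * \<i> * t)"
    have ce: "cnj e = inverse e" unfolding e_def by (simp add: exp_cnj exp_minus)
    have en: "e \<noteq> 0" unfolding e_def by simp
    have g: "circlepath 0 s t = s * e" unfolding circlepath e_def by simp
    show "(s^(2*n) / (2 * pi * \<i>)) * (f (circlepath 0 s t) / (circlepath 0 s t) ^ Suc n * (2 * pi * \<i> * s * exp(2 * of_real pi * \<i> * t)))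
       = f (circlepath 0 s t) * cnj (circlepath 0 s t) ^ n"
      unfolding g e_def[symmetric] using s en
      by (simp add: ce power_mult_distrib field_simps power_mult power2_eq_square)
  qed (simp add: field_simps)
qed

lemma parseval:
  fixes f :: "complex \<Rightarrow> complex"
  assumes hol: "f holomorphic_on ball 0 \<rho>" and s: "0 < s" "s < \<rho>"
  shows "summable (\<lambda>n. (cmod ((deriv ^^ n) f 0 / fact n))\<^sup>2 * s^(2*n)) \<and>
    ((\<lambda>t. (cmod (f (circlepath 0 s t)))\<^sup>2) has_integral
       (\<Sum>n. (cmod ((deriv ^^ n) f 0 / fact n))\<^sup>2 * s^(2*n))) {0..1}"
proof -
  define c where "c = (\<lambda>n. (deriv ^^ n) f 0 / fact n)"
  define \<gamma> where "\<gamma> = circlepath 0 s"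
  have ng: "norm (\<gamma> t) = s" for t unfolding \<gamma>_def circlepath using s by (simp add: norm_mult)
  have ser: "(\<lambda>n. c n * w^n) sums f w" if "norm w < \<rho>" for w
    using holomorphic_power_series[OF hol, of w] that by (simp add: c_def)
  define s' where "s' = (s + \<rho>)/2"
  have s': "s < s'" "s' < \<rho>" using s by (auto simp: s'_def)
  have "summable (\<lambda>n. c n * (complex_of_real s')^n)"
    using ser[of "complex_of_real s'"] s' s by (auto simp: sums_iff)
  then have absA: "summable (\<lambda>n. norm (c n * (complex_of_real s)^n))"
    by (rule powser_insidea) (use s s' in auto)
  define A where "A = (\<Sum>n. norm (c n * (complex_of_real s)^n))"
  have nA: "norm (c n * (complex_of_real s)^n) = norm (c n) * s^n" for n
    using s by (simp add: norm_mult norm_power)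
  have absA': "summable (\<lambda>n. norm (c n) * s^n)" using absA nA by simp
  have A': "A = (\<Sum>n. norm (c n) * s^n)" unfolding A_def nA ..
  have A0: "0 \<le> A" unfolding A' using absA' s by (intro suminf_nonneg) auto
  have termle: "norm (c n) * s^n \<le> A" for n
  proof -
    have "sum (\<lambda>n. norm (c n) * s^n) {n} \<le> A"
      unfolding A' using absA' s by (intro sum_le_suminf) auto
    then show ?thesis by simp
  qed
  have fb: "norm (f (\<gamma> t)) \<le> A" for t
  proof -
    have "(\<lambda>n. c n * (\<gamma> t)^n) sums f (\<gamma> t)" using ser[of "\<gamma> t"] ng s by simp
    then have "f (\<gamma> t) = (\<Sum>n. c n * (\<gamma> t)^n)" by (simp add: sums_iff)
    moreover have "norm (c n * (\<gamma> t)^n) = norm (c n) * s^n" for n by (simp add: norm_mult norm_power ng)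
    ultimately show ?thesis using summable_norm[of "\<lambda>n. c n * (\<gamma> t)^n"] absA' unfolding A' by simp
  qed
  define u where "u = (\<lambda>n t. cnj (c n) * (f (\<gamma> t) * cnj (\<gamma> t) ^ n))"
  have ui: "(u n has_integral (cnj (c n) * (c n * s^(2*n)))) {0..1}" for n
  proof -
    have cn: "(deriv ^^ n) f 0 / fact n = c n" by (simp add: c_def)
    show ?thesis unfolding u_def \<gamma>_def
      using has_integral_mult_right[OF fourier_coeff[OF hol s, of n, unfolded cn], of "cnj (c n)"] .
  qed
  have Pi: "((\<lambda>t. \<Sum>n<N. u n t) has_integral (\<Sum>n<N. cnj (c n) * (c n * s^(2*n)))) {0..1}" for N
    by (rule has_integral_sum) (use ui in auto)
  have usum: "(\<lambda>n. u n t) sums (f (\<gamma> t) * cnj (f (\<gamma> t)))" for t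
  proof -
    have "(\<lambda>n. c n * (\<gamma> t)^n) sums f (\<gamma> t)" using ser[of "\<gamma> t"] ng s by simp
    then have "(\<lambda>n. cnj (c n * (\<gamma> t)^n)) sums cnj (f (\<gamma> t))" by (simp only: sums_cnj)
    then have "(\<lambda>n. f (\<gamma> t) * cnj (c n * (\<gamma> t)^n)) sums (f (\<gamma> t) * cnj (f (\<gamma> t)))" by (rule sums_mult)
    then show ?thesis unfolding u_def by (simp add: mult_ac)
  qed
  have Pb: "norm (\<Sum>n<N. u n t) \<le> A * A" for N t
  proof -
    have "norm (\<Sum>n<N. u n t) \<le> (\<Sum>n<N. norm (u n t))" by (rule norm_sum)
    also have "\<dots> = norm (f (\<gamma> t)) * (\<Sum>n<N. norm (c n) * s^n)"
      unfolding u_def by (simp add: norm_mult norm_power ng sum_distrib_left mult_ac)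
    also have "\<dots> \<le> A * A"
    proof (rule mult_mono[OF fb])
      show "(\<Sum>n<N. norm (c n) * s^n) \<le> A" unfolding A' using absA' s by (intro sum_le_suminf) auto
    qed (use A0 s in \<open>auto intro!: sum_nonneg\<close>)
    finally show ?thesis .
  qed
  have summS: "summable (\<lambda>n. (cmod (c n))\<^sup>2 * s^(2*n))"
  proof (rule summable_comparison_test[OF _ summable_mult[OF absA', of A]])
    show "\<exists>N. \<forall>n\<ge>N. norm ((cmod (c n))\<^sup>2 * s^(2*n)) \<le> A * (norm (c n) * s^n)"
    proof (intro exI allI impI)
      fix n
      have "norm ((cmod (c n))\<^sup>2 * s^(2*n)) = (norm (c n) * s^n) * (norm (c n) * s^n)"
      proof -
        have e: "s^(2*n) = (s^n)^2" by (simp add: power_mult[symmetric] mult.commute)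
        show ?thesis unfolding e using s by (simp add: power2_eq_square abs_mult)
      qed
      also have "\<dots> \<le> A * (norm (c n) * s^n)" using termle s by (intro mult_right_mono) auto
      finally show "norm ((cmod (c n))\<^sup>2 * s^(2*n)) \<le> A * (norm (c n) * s^n)" .
    qed
  qed
  define S where "S = (\<Sum>n. (cmod (c n))\<^sup>2 * s^(2*n))"
  have ceq: "cnj (c n) * (c n * s^(2*n)) = complex_of_real ((cmod (c n))\<^sup>2 * s^(2*n))" for n
    by (simp add: complex_norm_square[symmetric] mult_ac)
  have ylim: "(\<lambda>N. \<Sum>n<N. cnj (c n) * (c n * s^(2*n))) \<longlonglongrightarrow> complex_of_real S"
  proof -
    have "(\<lambda>n. complex_of_real ((cmod (c n))\<^sup>2 * s^(2*n))) sums complex_of_real S"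
      unfolding S_def using summS by (intro sums_of_real summable_sums)
    then show ?thesis unfolding ceq sums_def .
  qed
  have hint: "(\<lambda>_::real. A*A) integrable_on {0..1}" by (rule integrable_const_ivl)
  have dom: "\<forall>x\<in>{0..1::real}. norm (\<Sum>n<k. u n x) \<le> A*A" for k
      using Pb by blast
  have lim: "\<forall>x\<in>{0..1::real}. (\<lambda>k. \<Sum>n<k. u n x) \<longlonglongrightarrow> f (\<gamma> x) * cnj (f (\<gamma> x))"
      using usum unfolding sums_def by blast
  have main: "((\<lambda>t. f (\<gamma> t) * cnj (f (\<gamma> t))) has_integral complex_of_real S) {0..1}"
    by (rule has_integral_dominated_convergence[where h="\<lambda>_. A*A", OF Pi hint dom lim ylim])
  have eq: "(\<lambda>t. f (\<gamma> t) * cnj (f (\<gamma> t))) = (\<lambda>t. complex_of_real ((cmod (f (\<gamma> t)))\<^sup>2))"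
    by (simp only: complex_norm_square[symmetric])
  have "((Re \<circ> (\<lambda>t. complex_of_real ((cmod (f (\<gamma> t)))\<^sup>2))) has_integral Re (complex_of_real S)) {0..1}"
    by (rule has_integral_linear[OF main[unfolded eq] bounded_linear_Re])
  then have "((\<lambda>t. (cmod (f (\<gamma> t)))\<^sup>2) has_integral S) {0..1}" by (simp add: o_def)
  then show ?thesis using summS unfolding S_def c_def \<gamma>_def by blast
qed

lemma mob_ineq:
  fixes w :: complex and a M :: real
  assumes M: "0 < M" and a: "0 \<le> a" "a < M" and w: "norm w < M"
  shows "norm (w - of_real a) < norm (of_real M - of_real (a/M) * w)"
proof -
  define x where "x = Re w"
  define y where "y = Im w"
  have w2: "x^2 + y^2 < M^2"
    using w M unfolding x_def y_def by (metis cmod_power2 norm_ge_zero power_strict_mono zero_less_numeral)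
  have l: "(norm (w - of_real a))^2 = (x - a)^2 + y^2"
    unfolding x_def y_def cmod_power2 by simp
  have r: "(norm (of_real M - of_real (a/M) * w))^2 = (M - a/M*x)^2 + (a/M*y)^2"
    unfolding x_def y_def cmod_power2 by simp
  have "M^2 * ((x - a)^2 + y^2) < M^2 * ((M - a/M*x)^2 + (a/M*y)^2)"
  proof -
    have e: "M^2 * ((M - a/M*x)^2 + (a/M*y)^2) - M^2 * ((x - a)^2 + y^2) = (M^2 - a^2) * (M^2 - (x^2+y^2))"
      using M by (simp add: field_simps power2_eq_square)
    have "0 < (M^2 - a^2) * (M^2 - (x^2+y^2))"
      using a M w2 by (intro mult_pos_pos) (auto simp: power_strict_mono)
    then show ?thesis using e by linarith
  qed
  then have "(norm (w - of_real a))^2 < (norm (of_real M - of_real (a/M) * w))^2"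
    unfolding l r using M by simp
  then show ?thesis by (rule power_less_imp_less_base) simp
qed

lemma schwarz_bound:
  fixes g :: "complex \<Rightarrow> complex" and a M R :: real
  assumes hol: "g holomorphic_on ball 0 R" and R: "0 < R" and M: "0 < M"
    and a: "0 \<le> a" "a < M" and bnd: "\<And>w. norm w < R \<Longrightarrow> norm (g w) < M"
    and g0: "g 0 = of_real a" and w: "norm w < R"
  shows "norm (g w - of_real a) \<le> (norm w / R) * norm (of_real M - of_real (a/M) * g w)"
proof -
  define \<phi> where "\<phi> = (\<lambda>z. (g (of_real R * z) - of_real a) / (of_real M - of_real (a/M) * g (of_real R * z)))"
  have den: "of_real M - of_real (a/M) * g w' \<noteq> 0" if "norm w' < R" for w'
  proof -
    have "norm (g w' - of_real a) < norm (of_real M - of_real (a/M) * g w')"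
      by (rule mob_ineq[OF M a bnd[OF that]])
    then show ?thesis by auto
  qed
  have sc: "norm (of_real R * z) < R" if "norm z < 1" for z :: complex
    using that R by (simp add: norm_mult)
  have hc: "(\<lambda>z. g (of_real R * z)) holomorphic_on ball 0 1"
    by (rule holomorphic_on_compose_gen[of "\<lambda>z. of_real R * z" _ g "ball 0 R", unfolded o_def])
       (use sc in \<open>auto intro!: holomorphic_intros hol\<close>)
  have hn: "(\<lambda>z. g (of_real R * z) - of_real a) holomorphic_on ball 0 1"
    by (rule holomorphic_on_diff[OF hc holomorphic_on_const])
  have hd: "(\<lambda>z. of_real M - of_real (a/M) * g (of_real R * z)) holomorphic_on ball 0 1"
    by (rule holomorphic_on_diff[OF holomorphic_on_const holomorphic_on_mult[OF holomorphic_on_const hc]])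
  have holphi: "\<phi> holomorphic_on ball 0 1"
    unfolding \<phi>_def by (rule holomorphic_on_divide[OF hn hd]) (use den sc in auto)
  have phi0: "\<phi> 0 = 0" unfolding \<phi>_def using g0 by simp
  have phi1: "norm (\<phi> z) < 1" if "norm z < 1" for z
  proof -
    have "norm (g (of_real R * z) - of_real a) < norm (of_real M - of_real (a/M) * g (of_real R * z))"
      by (rule mob_ineq[OF M a bnd[OF sc[OF that]]])
    then show ?thesis unfolding \<phi>_def by (simp add: norm_divide divide_less_eq)
  qed
  define z where "z = w / of_real R"
  have z: "norm z < 1" using w R by (simp add: z_def norm_divide)
  have wz: "of_real R * z = w" using R by (simp add: z_def)
  have "norm (\<phi> z) \<le> norm z" by (rule Schwarz_Lemma(1)[OF holphi phi0 phi1 z])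
  then have "norm (g w - of_real a) / norm (of_real M - of_real (a/M) * g w) \<le> norm w / R"
    unfolding \<phi>_def wz using R by (simp add: z_def norm_divide)
  then show ?thesis using den[OF w] by (simp add: divide_le_eq)
qed


theorem corollary1:
  fixes F :: "complex \<Rightarrow> complex" and a r :: real
  assumes "F \<in> bloch_class"
    and "taylor_coeff F 1 = complex_of_real a"
    and "0 < a" and "a < 1"
    and "0 < r" and "r \<le> 1 / sqrt 3"
  shows "summable (\<lambda>k. real (k + 2) * (norm (taylor_coeff F (k + 2)))^2 * r ^ (2 * (k + 2)))
    \<and> (\<Sum>k. real (k + 2) * (norm (taylor_coeff F (k + 2)))^2 * r ^ (2 * (k + 2)))
        \<le> 3 * (9 - 4 * a^2)^2 / (64 * a^4) *
           (- ln (1 - 4 * a^2 * r^2 / 3) - 4 * a^2 * r^2 / 3)"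
proof -
  have holF: "F holomorphic_on ball 0 1" and bF: "\<And>z. z \<in> ball 0 1 \<Longrightarrow> norm (deriv F z) \<le> 1 / (1 - (norm z)^2)"
    using assms(1) unfolding bloch_class_def by auto
  define g where "g = deriv F"
  have holg: "g holomorphic_on ball 0 1" unfolding g_def by (rule holomorphic_deriv[OF holF open_ball])
  have g0: "g 0 = of_real a" using assms(2) unfolding taylor_coeff_def g_def by simp
  define R where "R = 1 / sqrt 3"
  have R: "0 < R" "R < 1" unfolding R_def by (auto simp: divide_less_eq)
  have R2: "R^2 = 1/3" unfolding R_def by (simp add: power_divide)
  have gb: "norm (g w) < 3/2" if "norm w < R" for w
  proof -
    have w2: "(norm w)^2 < 1/3" using that R R2 by (metis norm_ge_zero power_strict_mono zero_less_numeral)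
    have "norm (g w) \<le> 1 / (1 - (norm w)^2)" unfolding g_def using that R by (intro bF) auto
    also have "\<dots> < 3/2" using w2 by (simp add: divide_less_eq)
    finally show ?thesis .
  qed
  have holgR: "g holomorphic_on ball 0 R" using holg R by (meson holomorphic_on_subset less_eq_real_def subset_ball)
  define \<alpha> where "\<alpha> = 2 * a / 3"
  define K where "K = (9 - 4 * a^2) / 6"
  define G1 where "G1 = (\<lambda>w. g w - of_real a)"
  define G2 where "G2 = (\<lambda>w. of_real K - of_real \<alpha> * G1 w)"
  have pw: "norm (G1 w) \<le> (norm w / R) * norm (G2 w)" if "norm w < R" for w
  proof -
    have "norm (g w - of_real a) \<le> (norm w / R) * norm (of_real (3/2) - of_real (a/(3/2)) * g w)"
      by (rule schwarz_bound[OF holgR R(1) _ _ _ gb g0 that]) (use assms(3,4) in auto)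
    moreover have "of_real (3/2) - of_real (a/(3/2)) * g w = G2 w"
      unfolding G2_def G1_def K_def \<alpha>_def by (simp add: field_simps power2_eq_square)
    ultimately show ?thesis unfolding G1_def by simp
  qed
  have holG1: "G1 holomorphic_on ball 0 1" unfolding G1_def by (intro holomorphic_intros holg)
  have holG2: "G2 holomorphic_on ball 0 1" unfolding G2_def by (intro holomorphic_intros holG1)
  define p where "p = (\<lambda>n. (deriv ^^ n) G1 0 / fact n)"
  define e where "e = (\<lambda>n. (cmod (p n))^2)"
  have p0: "p 0 = 0" unfolding p_def G1_def using g0 by simp
  have e0: "e 0 = 0" unfolding e_def p0 by simp
  have q: "(deriv ^^ n) G2 0 / fact n = (if n = 0 then of_real K else - of_real \<alpha> * p n)" for n
  proof -
    have "(deriv ^^ n) G2 0 = (deriv ^^ n) (\<lambda>w. of_real K) 0 - (deriv ^^ n) (\<lambda>w. of_real \<alpha> * G1 w) 0"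
      unfolding G2_def by (rule higher_deriv_diff[of _ "ball 0 1"]) (auto intro!: holomorphic_intros holG1)
    also have "(deriv ^^ n) (\<lambda>w. of_real \<alpha> * G1 w) 0 = of_real \<alpha> * (deriv ^^ n) G1 0"
      by (rule higher_deriv_cmult[OF holG1]) auto
    finally have "(deriv ^^ n) G2 0 = (if n = 0 then of_real K else 0) - of_real \<alpha> * (deriv ^^ n) G1 0" by simp
    then show ?thesis using p0 unfolding p_def by (auto simp: diff_divide_distrib)
  qed
  have pt: "p n = of_nat (n+1) * taylor_coeff F (n+1)" if "n \<ge> 1" for n
  proof -
    have "(deriv ^^ n) G1 0 = (deriv ^^ n) g 0 - (deriv ^^ n) (\<lambda>w. of_real a) 0"
      unfolding G1_def by (rule higher_deriv_diff[of _ "ball 0 1"]) (auto intro!: holomorphic_intros holg)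
    then have d1: "(deriv ^^ n) G1 0 = (deriv ^^ n) g 0" using that by simp
    have d2: "(deriv ^^ Suc n) F 0 = (deriv ^^ n) g 0" unfolding g_def funpow_Suc_right o_def ..
    have tc: "taylor_coeff F (Suc n) = ((deriv ^^ n) g 0 / fact n) / of_nat (Suc n)"
      unfolding taylor_coeff_def d2 fact_Suc of_nat_mult of_nat_fact by (simp add: mult.commute)
    have "of_nat (Suc n) * taylor_coeff F (Suc n) = (deriv ^^ n) g 0 / fact n"
      unfolding tc by (simp del: of_nat_Suc)
    then show ?thesis unfolding p_def d1 Suc_eq_plus1 by simp
  qed
  have key: "summable (\<lambda>n. e n * t^n) \<and> (\<Sum>n. e n * t^n) \<le> 3 * K^2 * t / (1 - 4 * a^2 * t / 3)"
    if t: "0 < t" "t < 1/3" for t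
  proof -
    define \<rho> where "\<rho> = sqrt t"
    have \<rho>0: "0 < \<rho>" unfolding \<rho>_def using t by simp
    have \<rho>2: "\<rho>^2 = t" unfolding \<rho>_def using t by simp
    have \<rho>R: "\<rho> < R"
    proof -
      have "sqrt t < sqrt (1/3)" using t by simp
      then show ?thesis unfolding \<rho>_def R_def by (simp add: real_sqrt_divide)
    qed
    have \<rho>1: "\<rho> < 1" using \<rho>R R by simp
    have pw2: "\<And>n. \<rho>^(2*n) = t^n" by (simp add: power_mult \<rho>2)
    have pd: "\<And>n. (deriv ^^ n) G1 0 / fact n = p n" by (simp add: p_def)
    note P1 = parseval[OF holG1 \<rho>0 \<rho>1, unfolded pd pw2]
    have sum1: "summable (\<lambda>n. e n * t^n)" using P1 unfolding e_def by blast
    define S1 where "S1 = (\<Sum>n. e n * t^n)"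
    have int1: "((\<lambda>x. (cmod (G1 (circlepath 0 \<rho> x)))\<^sup>2) has_integral S1) {0..1}"
      using P1 unfolding e_def S1_def by blast
    note P2 = parseval[OF holG2 \<rho>0 \<rho>1, unfolded pw2 q]
    have cf: "(cmod (if n = 0 then of_real K else - of_real \<alpha> * p n))\<^sup>2 * t^n
        = (if n = 0 then K^2 else 0) + \<alpha>^2 * (e n * t^n)" for n
      using e0 by (cases "n = 0") (auto simp: e_def norm_mult power_mult_distrib)
    have A: "(\<lambda>n. if n = 0 then K^2 else 0) sums K^2" using sums_single[of 0 "\<lambda>_. K^2"] by simp
    have B: "(\<lambda>n. \<alpha>^2 * (e n * t^n)) sums (\<alpha>^2 * S1)"
      unfolding S1_def by (rule sums_mult[OF summable_sums[OF sum1]])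
    have "(\<lambda>n. (if n = 0 then K^2 else 0) + \<alpha>^2 * (e n * t^n)) sums (K^2 + \<alpha>^2 * S1)"
      by (rule sums_add[OF A B])
    then have s2: "(\<lambda>n. (cmod (if n = 0 then of_real K else - of_real \<alpha> * p n))\<^sup>2 * t^n) sums (K^2 + \<alpha>^2 * S1)"
      unfolding cf .
    have int2: "((\<lambda>x. (cmod (G2 (circlepath 0 \<rho> x)))\<^sup>2) has_integral (K^2 + \<alpha>^2 * S1)) {0..1}"
      using P2 s2 by (simp add: sums_iff)
    have le: "S1 \<le> (\<rho>/R)^2 * (K^2 + \<alpha>^2 * S1)"
    proof (rule has_integral_le[OF int1 has_integral_mult_right[OF int2]])
      fix x :: real
      define w where "w = circlepath 0 \<rho> x"
      have nw: "norm w = \<rho>" unfolding w_def circlepath using \<rho>0 by (simp add: norm_mult)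
      have "norm (G1 w) \<le> (\<rho> / R) * norm (G2 w)" using pw[of w] nw \<rho>R by simp
      then have "(norm (G1 w))^2 \<le> ((\<rho> / R) * norm (G2 w))^2" by (intro power_mono) auto
      then show "(cmod (G1 (circlepath 0 \<rho> x)))\<^sup>2 \<le> (\<rho>/R)^2 * (cmod (G2 (circlepath 0 \<rho> x)))\<^sup>2"
        unfolding w_def by (simp only: power_mult_distrib)
    qed
    have f1: "(\<rho>/R)^2 = 3 * t" unfolding power_divide \<rho>2 R2 by simp
    have f2: "\<alpha>^2 = 4 * a^2 / 9" unfolding \<alpha>_def by (simp add: power_divide power_mult_distrib)
    have le2: "S1 * (1 - 4 * a^2 * t / 3) \<le> 3 * K^2 * t"
      using le unfolding f1 f2 by (simp add: algebra_simps)
    have a2: "a^2 \<le> 1" using assms(3,4) by (simp add: power_le_one)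
    have "a^2 * t \<le> t" using a2 t by (intro mult_left_le_one_le) auto
    moreover have "4 * a^2 * t = 4 * (a^2 * t)" by simp
    ultimately have pos: "0 < 1 - 4 * a^2 * t / 3" using t by linarith
    have "S1 \<le> 3 * K^2 * t / (1 - 4 * a^2 * t / 3)" using le2 pos by (simp add: le_divide_eq)
    then show ?thesis using sum1 unfolding S1_def by blast
  qed
  have esum: "summable (\<lambda>n. e n * (1/2)^n)"
  proof -
    have s2: "(1 / sqrt 2)^2 = (1/2::real)" by (simp add: power_divide)
    have "summable (\<lambda>n. (cmod ((deriv ^^ n) G1 0 / fact n))\<^sup>2 * (1 / sqrt 2)^(2*n))"
      using parseval[OF holG1, of "1 / sqrt 2"] by (simp add: divide_less_eq)
    then show ?thesis unfolding e_def p_def power_mult s2 .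
  qed
  define l where "l = (\<lambda>n. if n < 2 then 0 else e (n - 1) / real n)"
  have lsum: "summable (\<lambda>n. l n * (1/2)^n)"
  proof -
    have "summable (\<lambda>n. l (Suc n) * (1/2)^(Suc n))"
    proof (rule summable_comparison_test[OF _ esum])
      show "\<exists>N. \<forall>n\<ge>N. norm (l (Suc n) * (1/2)^(Suc n)) \<le> e n * (1/2)^n"
      proof (intro exI allI impI)
        fix n :: nat
        have en: "0 \<le> e n" unfolding e_def by simp
        have "norm (l (Suc n) * (1/2)^(Suc n)) \<le> e n / real (Suc n) * (1/2)^(Suc n)"
        proof -
          have l1: "0 \<le> l (Suc n)" "l (Suc n) \<le> e n / real (Suc n)" unfolding l_def using en by auto
          have "norm (l (Suc n) * (1/2)^(Suc n)) = l (Suc n) * (1/2)^(Suc n)" using l1 by simp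
          also have "\<dots> \<le> e n / real (Suc n) * (1/2)^(Suc n)" using l1 by (intro mult_right_mono) auto
          finally show ?thesis .
        qed
        also have "\<dots> \<le> e n * (1/2)^n"
        proof -
          have "e n / real (Suc n) \<le> e n" using en by (simp add: divide_le_eq mult_le_cancel_left1 )
          then have "e n / real (Suc n) * (1/2)^(Suc n) \<le> e n * (1/2)^(Suc n)" by (intro mult_right_mono) auto
          also have "\<dots> \<le> e n * (1/2)^n" using en by (intro mult_left_mono) (auto simp: power_decreasing)
          finally show ?thesis .
        qed
        finally show "norm (l (Suc n) * (1/2)^(Suc n)) \<le> e n * (1/2)^n" .
      qed
    qed
    then show ?thesis using summable_Suc_iff[where f="\<lambda>n. l n * (1/2)^n"] by blast
  qed
  have dl: "diffs l = e"
  proof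
    fix n
    show "diffs l n = e n"
      by (cases n) (auto simp: diffs_def l_def e0)
  qed
  define L where "L = (\<lambda>t. \<Sum>n. l n * t^n)"
  define E where "E = (\<lambda>t. \<Sum>n. e n * t^n)"
  have DL: "DERIV L t :> E t" if "\<bar>t\<bar> < 1/2" for t
    unfolding L_def E_def using termdiffs_strong[OF lsum, of t] that dl by simp
  define C where "C = 3 * (9 - 4 * a^2)^2 / (64 * a^4)"
  define Gf where "Gf = (\<lambda>t. C * (- ln (1 - 4 * a^2 * t / 3) - 4 * a^2 * t / 3))"
  have DG: "DERIV Gf t :> C * ((4 * a^2 / 3) / (1 - 4 * a^2 * t / 3) - 4 * a^2 / 3)" if "4 * a^2 * t / 3 < 1" for t
    unfolding Gf_def using that by (auto intro!: derivative_eq_intros simp: field_simps)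
  have Geq: "C * ((4 * a^2 / 3) / (1 - 4 * a^2 * t / 3) - 4 * a^2 / 3) = 3 * K^2 * t / (1 - 4 * a^2 * t / 3)"
    if "4 * a^2 * t / 3 < 1" for t
  proof -
    have nz: "1 - 4 * a^2 * t / 3 \<noteq> 0" using that by simp
    have e1: "(4 * a^2 / 3) / (1 - 4 * a^2 * t / 3) - 4 * a^2 / 3 = (4 * a^2 / 3)^2 * t / (1 - 4 * a^2 * t / 3)"
      using nz by (simp add: field_simps power2_eq_square)
    have e2: "C * (4 * a^2 / 3)^2 = 3 * K^2"
      unfolding C_def K_def using assms(3) by (simp add: field_simps eval_nat_numeral)
    show ?thesis unfolding e1 using e2 by (simp add: mult.assoc[symmetric])
  qed
  have r2: "r^2 \<le> 1/3"
  proof -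
    have "r^2 \<le> (1 / sqrt 3)^2" using assms(5,6) by (intro power_mono) auto
    then show ?thesis by (simp add: power_divide)
  qed
  define D where "D = (\<lambda>t. Gf t - L t)"
  have a2: "a^2 \<le> 1" using assms(3,4) by (simp add: power_le_one)
  have bx: "4 * a^2 * x / 3 < 1" if "0 \<le> x" "x \<le> 1/3" for x
  proof -
    have "a^2 * x \<le> x" using a2 that by (intro mult_left_le_one_le) auto
    moreover have "4 * a^2 * x = 4 * (a^2 * x)" by simp
    ultimately show ?thesis using that by linarith
  qed
  have DD: "DERIV D x :> C * ((4 * a^2 / 3) / (1 - 4 * a^2 * x / 3) - 4 * a^2 / 3) - E x"
    if "0 \<le> x" "x \<le> 1/3" for x
    unfolding D_def by (intro DERIV_diff DG DL bx) (use that in auto)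
  have "D 0 \<le> D (r^2)"
  proof (rule DERIV_nonneg_imp_increasing_open[of 0 "r^2" D])
    show "0 \<le> r^2" by simp
  next
    fix x assume x: "0 < x" "x < r^2"
    have x3: "x < 1/3" using x r2 by simp
    have "E x \<le> C * ((4 * a^2 / 3) / (1 - 4 * a^2 * x / 3) - 4 * a^2 / 3)"
      using key[OF x(1) x3] Geq[OF bx] x x3 unfolding E_def by simp
    then show "\<exists>y. DERIV D x :> y \<and> 0 \<le> y"
      using DD[of x] x x3 by (intro exI[of _ "C * ((4 * a^2 / 3) / (1 - 4 * a^2 * x / 3) - 4 * a^2 / 3) - E x"]) auto
  next
    show "continuous_on {0..r^2} D"
    proof (rule continuous_at_imp_continuous_on, intro ballI)
      fix x assume "x \<in> {0..r^2}"
      then have "0 \<le> x" "x \<le> 1/3" using r2 by auto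
      then show "isCont D x" using DD by (blast intro: DERIV_isCont)
    qed
  qed
  moreover have "D 0 = 0" unfolding D_def Gf_def L_def by (simp add: l_def)
  ultimately have Lle: "L (r^2) \<le> Gf (r^2)" unfolding D_def by simp
  have trm: "real (k + 2) * (norm (taylor_coeff F (k + 2)))^2 * r ^ (2 * (k + 2)) = l (k + 2) * (r^2)^(k+2)" for k
  proof -
    have "p (k+1) = of_nat (k+2) * taylor_coeff F (k+2)" using pt[of "k+1"] by simp
    moreover have nz: "(of_nat (k+2) :: complex) \<noteq> 0" by (simp only: of_nat_eq_0_iff)
    ultimately have tc: "taylor_coeff F (k+2) = p (k+1) / of_nat (k+2)"
      by (metis nonzero_mult_div_cancel_left)
    have "(norm (taylor_coeff F (k + 2)))^2 = e (k+1) / (real (k+2))^2"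
      unfolding tc e_def norm_divide norm_of_nat by (simp add: power_divide)
    then have "real (k + 2) * (norm (taylor_coeff F (k + 2)))^2 = e (k+1) / real (k+2)"
      by (simp add: power2_eq_square)
    moreover have "l (k+2) = e (k+1) / real (k+2)" unfolding l_def by simp
    moreover have "r ^ (2 * (k + 2)) = (r^2)^(k+2)" by (rule power_mult)
    ultimately show ?thesis by simp
  qed
  have lsr: "summable (\<lambda>n. l n * (r^2)^n)"
    by (rule powser_inside[OF lsum]) (use r2 in auto)
  have sh: "(\<Sum>n. l n * (r^2)^n) = (\<Sum>k. l (k+2) * (r^2)^(k+2))"
    using suminf_split_initial_segment[OF lsr, of 2] by (simp add: l_def numeral_2_eq_2)
  have lsr2: "summable (\<lambda>k. l (k+2) * (r^2)^(k+2))"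
    using summable_iff_shift[where f="\<lambda>n. l n * (r^2)^n" and k=2] lsr by blast
  have Lle': "(\<Sum>k. l (k+2) * (r^2)^(k+2)) \<le> 3 * (9 - 4 * a^2)^2 / (64 * a^4) *
           (- ln (1 - 4 * a^2 * r^2 / 3) - 4 * a^2 * r^2 / 3)"
    using Lle sh unfolding L_def Gf_def C_def by linarith
  show ?thesis unfolding trm using lsr2 Lle' by blast
qed

end
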